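(* Let $N$ be an NFA and let $\sim$ be an equivalence relation on its vertex set that refines $\sim_{\mathrm{fwd}}$. Let $\bar N$ be the NFA obtained by grouping $N$ by $\sim$. Then $\bar N$ has a conflict if and only if $N$ has a conflict.
   Context: An NFA $N$ over a finite alphabet $A$, with action set $T$ and a relation $\mathrm{conf}\subseteq T\times T$, consists of a finite vertex set $V$, a starting vertex $v_s\in V$, an accepting action set $T_v\subseteq T$ for each $v\in V$, and a set of labeled edges $v\xrightarrow{\lambda}w$ with $v,w\in V$ and $\lambda\in A\cup\{\varepsilon\}$. For $U,W\subseteq T$, $\mathrm{conf}(U,W)$ means $\mathrm{conf}(a,b)$ for some $a\in U,b\in W$. For a vertex $u$ and a finite sequence $\tau=\tau_1\cdots\tau_r$ ($r\ge0$) with $\tau_i\in A\cup\{\varepsilon\}$, a vertex $w$ is reachable from $u$ on $\tau$ if there are vertices $u=v_1,\dots,v_{r+1}=w$ with an edge $v_i\xrightarrow{\tau_i}v_{i+1}$ for each $i$; $w$ is reachable from $u$ on a string $\zeta\in A^*$ if it is reachable on some sequence whose concatenation (reading $\varepsilon$ as the empty string) equals $\zeta$. A conflict in $N$ consists of two (not necessarily distinct) vertices $w,w'$ that are both reachable from $v_s$ on the same string $\zeta\in A^*$ and satisfy $\mathrm{conf}(T_w,T_{w'})$. Given an equivalence relation $\sim$ on $V$, the grouped NFA $\bar N$ has as vertices the equivalence classes, starting vertex the class of $v_s$, action sets $T_{\bar v}=\bigcup_{v\in\bar v}T_v$, and an edge $\bar v\xrightarrow{\lambda}\bar w$ iff some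 $v\in\bar v$, $w\in\bar w$ have an edge $v\xrightarrow{\lambda}w$ in $N$. Vertices $v_1,v_2$ of $N$ are forward-equivalent, $v_1\sim_{\mathrm{fwd}}v_2$, if for every finite sequence $\tau$ over $A\cup\{\varepsilon\}$, $v_1$ is reachable from $v_s$ on $\tau$ iff $v_2$ is reachable from $v_s$ on $\tau$. *)

theory Defs
  imports Main
begin

text \<open>An NFA over alphabet A with action set T. Edge labels are
  'a option, where None stands for epsilon. The alphabet A, the action set T
  and the relation conf are external parameters.\<close>

record ('v, 'a, 't) nfa =
  verts :: "'v set"
  start :: 'v
  accs  :: "'v \<Rightarrow> 't set"
  edges :: "('v \<times> 'a option \<times> 'v) set"

definition is_nfa ::
  "'a set \<Rightarrow> 't set \<Rightarrow> ('t \<Rightarrow> 't \<Rightarrow> bool) \<Rightarrow> ('v, 'a, 't) nfa \<Rightarrow> bool" where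
  "is_nfa A T conf N \<longleftrightarrow>
     finite A \<and> (\<forall>x y. conf x y \<longrightarrow> x \<in> T \<and> y \<in> T) \<and>
     finite (verts N) \<and> start N \<in> verts N \<and>
     (\<forall>v \<in> verts N. accs N v \<subseteq> T) \<and>
     edges N \<subseteq> verts N \<times> (Some ` A \<union> {None}) \<times> verts N"

inductive reach_seq :: "('v, 'a, 't) nfa \<Rightarrow> 'v \<Rightarrow> 'a option list \<Rightarrow> 'v \<Rightarrow> bool"
  for N where
  nil: "reach_seq N u [] u"
| cons: "(u, l, v) \<in> edges N \<Longrightarrow> reach_seq N v ls w \<Longrightarrow> reach_seq N u (l # ls) w"

definition word_of :: "'a option list \<Rightarrow> 'a list" where
  "word_of ls = concat (map (\<lambda>l. case l of None \<Rightarrow> [] | Some a \<Rightarrow> [a]) ls)"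

definition reach_str :: "('v, 'a, 't) nfa \<Rightarrow> 'v \<Rightarrow> 'a list \<Rightarrow> 'v \<Rightarrow> bool" where
  "reach_str N u z w \<longleftrightarrow> (\<exists>ls. reach_seq N u ls w \<and> word_of ls = z)"

definition conf_sets :: "('t \<Rightarrow> 't \<Rightarrow> bool) \<Rightarrow> 't set \<Rightarrow> 't set \<Rightarrow> bool" where
  "conf_sets conf U W \<longleftrightarrow> (\<exists>a \<in> U. \<exists>b \<in> W. conf a b)"

definition has_conflict ::
  "'a set \<Rightarrow> ('t \<Rightarrow> 't \<Rightarrow> bool) \<Rightarrow> ('v, 'a, 't) nfa \<Rightarrow> bool" where
  "has_conflict A conf N \<longleftrightarrow>
     (\<exists>w \<in> verts N. \<exists>w' \<in> verts N. \<exists>z. set z \<subseteq> A \<and>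
        reach_str N (start N) z w \<and> reach_str N (start N) z w' \<and>
        conf_sets conf (accs N w) (accs N w'))"

definition fwd_equiv :: "'a set \<Rightarrow> ('v, 'a, 't) nfa \<Rightarrow> 'v \<Rightarrow> 'v \<Rightarrow> bool" where
  "fwd_equiv A N v1 v2 \<longleftrightarrow>
     (\<forall>ls. set ls \<subseteq> Some ` A \<union> {None} \<longrightarrow>
        (reach_seq N (start N) ls v1 \<longleftrightarrow> reach_seq N (start N) ls v2))"

definition group_nfa :: "('v, 'a, 't) nfa \<Rightarrow> ('v \<times> 'v) set \<Rightarrow> ('v set, 'a, 't) nfa" where
  "group_nfa N R =
     \<lparr> verts = verts N // R,
       start = R `` {start N},
       accs = (\<lambda>C. \<Union>v \<in> C. accs N v),
       edges = {(C, l, D). C \<in> verts N // R \<and> D \<in> verts N // R \<and>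
                  (\<exists>v \<in> C. \<exists>w \<in> D. (v, l, w) \<in> edges N)} \<rparr>"

end

theory Submission
  imports Defs
begin

lemma reach_snoc:
  "reach_seq N u (ls @ [l]) w \<longleftrightarrow> (\<exists>v. reach_seq N u ls v \<and> (v, l, w) \<in> edges N)"
proof (induction ls arbitrary: u)
  case Nil
  show ?case
    by (auto intro: reach_seq.intros elim: reach_seq.cases)
next
  case (Cons a ls)
  show ?case
  proof
    assume "reach_seq N u ((a # ls) @ [l]) w"
    then obtain x where "(u,a,x) \<in> edges N" "reach_seq N x (ls @ [l]) w"
      by (auto elim: reach_seq.cases)
    thus "\<exists>v. reach_seq N u (a # ls) v \<and> (v, l, w) \<in> edges N"
      using Cons.IH by (auto intro: reach_seq.intros)
  next
    assume "\<exists>v. reach_seq N u (a # ls) v \<and> (v, l, w) \<in> edges N"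
    then obtain v x where "(u,a,x) \<in> edges N" "reach_seq N x ls v" "(v, l, w) \<in> edges N"
      by (auto elim: reach_seq.cases)
    thus "reach_seq N u ((a # ls) @ [l]) w"
      using Cons.IH by (auto intro: reach_seq.intros)
  qed
qed

lemma reach_labels:
  assumes "reach_seq M u ls w" "\<forall>(x,l,y) \<in> edges M. l \<in> L"
  shows "set ls \<subseteq> L"
  using assms by (induction rule: reach_seq.induct) auto

lemma group_up:
  assumes nfa: "is_nfa A T conf N" and eq: "equiv (verts N) R"
    and fw: "\<And>v1 v2. (v1, v2) \<in> R \<Longrightarrow> fwd_equiv A N v1 v2"
  shows "reach_seq (group_nfa N R) (start (group_nfa N R)) ls D \<Longrightarrow>
     D \<in> verts N // R \<and> (\<forall>w\<in>D. reach_seq N (start N) ls w)"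
proof (induction ls arbitrary: D rule: rev_induct)
  case Nil
  hence D: "D = R `` {start N}" by (auto simp: group_nfa_def elim: reach_seq.cases)
  have sv: "start N \<in> verts N" using nfa by (simp add: is_nfa_def)
  have "\<forall>w\<in>D. reach_seq N (start N) [] w"
  proof
    fix w assume "w \<in> D"
    hence "(start N, w) \<in> R" using D by auto
    from fw[OF this] show "reach_seq N (start N) [] w"
      unfolding fwd_equiv_def by (metis empty_set empty_subsetI reach_seq.nil)
  qed
  moreover have "D \<in> verts N // R" using D sv by (simp add: quotientI)
  ultimately show ?case by blast
next
  case (snoc l ls)
  then obtain C where C: "reach_seq (group_nfa N R) (start (group_nfa N R)) ls C"
    "(C, l, D) \<in> edges (group_nfa N R)" using reach_snoc by metis
  from snoc.IH[OF C(1)] have IH: "\<forall>w\<in>C. reach_seq N (start N) ls w" by blast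
  from C(2) have DQ: "D \<in> verts N // R" and "\<exists>v \<in> C. \<exists>w \<in> D. (v, l, w) \<in> edges N"
    by (auto simp: group_nfa_def)
  then obtain v w' where v: "v \<in> C" "w' \<in> D" "(v, l, w') \<in> edges N" by blast
  have r: "reach_seq N (start N) (ls @ [l]) w'" using IH v reach_snoc by metis
  have lab: "\<forall>(x,l,y) \<in> edges N. l \<in> Some ` A \<union> {None}"
    using nfa unfolding is_nfa_def by blast
  have sl: "set (ls @ [l]) \<subseteq> Some ` A \<union> {None}" using reach_labels[OF r lab] .
  have "\<forall>w\<in>D. reach_seq N (start N) (ls @ [l]) w"
  proof
    fix w assume "w \<in> D"
    hence "(w', w) \<in> R" using DQ v(2) eq
      by (metis quotient_eq_iff)
    from fw[OF this] sl r show "reach_seq N (start N) (ls @ [l]) w"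
      unfolding fwd_equiv_def by blast
  qed
  thus ?case using DQ by blast
qed

lemma group_down:
  assumes nfa: "is_nfa A T conf N" and eq: "equiv (verts N) R"
  shows "reach_seq N u ls w \<Longrightarrow> u \<in> verts N \<Longrightarrow>
     reach_seq (group_nfa N R) (R `` {u}) ls (R `` {w}) \<and> w \<in> verts N"
proof (induction rule: reach_seq.induct)
  case (nil u)
  then show ?case by (auto intro: reach_seq.nil)
next
  case (cons u l v ls w)
  have vv: "v \<in> verts N" using cons.hyps(1) nfa unfolding is_nfa_def by blast
  have "(R``{u}, l, R``{v}) \<in> edges (group_nfa N R)"
    unfolding group_nfa_def using cons.prems vv cons.hyps(1) eq
    by (auto intro!: quotientI simp: equiv_def refl_on_def)
  thus ?case using cons.IH[OF vv] by (auto intro: reach_seq.cons)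
qed

theorem mainTheorem5:
  fixes N :: "('v, 'a, 't) nfa" and A :: "'a set" and T :: "'t set"
    and conf :: "'t \<Rightarrow> 't \<Rightarrow> bool" and R :: "('v \<times> 'v) set"
  assumes "is_nfa A T conf N"
    and "equiv (verts N) R"
    and "\<And>v1 v2. (v1, v2) \<in> R \<Longrightarrow> fwd_equiv A N v1 v2"
  shows "has_conflict A conf (group_nfa N R) \<longleftrightarrow> has_conflict A conf N"
proof
  assume "has_conflict A conf (group_nfa N R)"
  then obtain C C' z ls ls' a b where
    z: "set z \<subseteq> A" and
    r1: "reach_seq (group_nfa N R) (start (group_nfa N R)) ls C" "word_of ls = z" and
    r2: "reach_seq (group_nfa N R) (start (group_nfa N R)) ls' C'" "word_of ls' = z" and
    a: "a \<in> accs (group_nfa N R) C" and b: "b \<in> accs (group_nfa N R) C'" and ab: "conf a b"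
    unfolding has_conflict_def reach_str_def conf_sets_def by blast
  from a obtain v where v: "v \<in> C" "a \<in> accs N v" by (auto simp: group_nfa_def)
  from b obtain v' where v': "v' \<in> C'" "b \<in> accs N v'" by (auto simp: group_nfa_def)
  note u1 = group_up[OF assms r1(1)] and u2 = group_up[OF assms r2(1)]
  have "v \<in> verts N" "v' \<in> verts N"
    using u1 u2 v v' assms(2) by (meson in_quotient_imp_subset subsetD)+
  thus "has_conflict A conf N"
    unfolding has_conflict_def reach_str_def conf_sets_def
    using z r1 r2 u1 u2 v v' ab by blast
next
  assume "has_conflict A conf N"
  then obtain w w' z ls ls' a b where
    z: "set z \<subseteq> A" and
    r1: "reach_seq N (start N) ls w" "word_of ls = z" and
    r2: "reach_seq N (start N) ls' w'" "word_of ls' = z" and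
    a: "a \<in> accs N w" and b: "b \<in> accs N w'" and ab: "conf a b"
    unfolding has_conflict_def reach_str_def conf_sets_def by blast
  have sv: "start N \<in> verts N" using assms(1) by (simp add: is_nfa_def)
  note d1 = group_down[OF assms(1,2) r1(1) sv] and d2 = group_down[OF assms(1,2) r2(1) sv]
  have wR: "w \<in> R``{w}" "w' \<in> R``{w'}" using d1 d2 assms(2)
    by (auto simp: equiv_def refl_on_def)
  have q: "R``{w} \<in> verts (group_nfa N R)" "R``{w'} \<in> verts (group_nfa N R)"
    using d1 d2 by (auto simp: group_nfa_def intro: quotientI)
  have st: "start (group_nfa N R) = R``{start N}" by (simp add: group_nfa_def)
  have "a \<in> accs (group_nfa N R) (R``{w})" "b \<in> accs (group_nfa N R) (R``{w'})"
    using wR a b by (auto simp: group_nfa_def)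
  thus "has_conflict A conf (group_nfa N R)"
    unfolding has_conflict_def reach_str_def conf_sets_def
    using z r1 r2 d1 d2 q st ab by metis
qed

end
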